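(* For every $\alpha\in(0,\pi]$, \[ P(S_\alpha)=\frac{1}{\sin\frac{\alpha}{2}}. \]
   Context: For $\alpha\in(0,2\pi)$ the angular domain is $S_\alpha=\{re^{it}: r>0,\ t\in(0,\alpha)\}\subset\mathbb{C}$; its boundary in $\overline{\mathbb{C}}=\mathbb{C}\cup\{\infty\}$ is the Jordan curve consisting of the two rays from $0$ together with the points $0$ and $\infty$. For four distinct points $a,b,c,d\in\overline{\mathbb{C}}$ set $p(a,b,c,d)=\frac{|a-b||c-d|+|a-d||b-c|}{|a-c||b-d|}$, where if one of the points is $\infty$ the expression is understood as the limit (all factors containing $\infty$ cancelled). For a domain $D\subset\overline{\mathbb{C}}$ whose boundary is a Jordan curve, $P(D)=\sup p(a,b,c,d)$ over all distinct $a,b,c,d\in\partial D$ occurring in this order when $\partial D$ is traversed in the positive direction. *)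

theory Defs
  imports "HOL-Analysis.Analysis" "HOL-Library.Extended_Real"
begin

text \<open>Points of the extended plane: \<open>Some z\<close> is the finite point z, \<open>None\<close> is \<infinity>.\<close>

definition cr_fin :: "complex \<Rightarrow> complex \<Rightarrow> complex \<Rightarrow> complex \<Rightarrow> real" where
  "cr_fin a b c d =
     (cmod (a - b) * cmod (c - d) + cmod (a - d) * cmod (b - c)) / (cmod (a - c) * cmod (b - d))"

text \<open>The quantity p(a,b,c,d); if one point is \<infinity>, all factors containing it are cancelled.\<close>
fun pq :: "complex option \<Rightarrow> complex option \<Rightarrow> complex option \<Rightarrow> complex option \<Rightarrow> real" where
  "pq (Some a) (Some b) (Some c) (Some d) = cr_fin a b c d"
| "pq None (Some b) (Some c) (Some d) = (cmod (c - d) + cmod (b - c)) / cmod (b - d)"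
| "pq (Some a) None (Some c) (Some d) = (cmod (c - d) + cmod (a - d)) / cmod (a - c)"
| "pq (Some a) (Some b) None (Some d) = (cmod (a - b) + cmod (a - d)) / cmod (b - d)"
| "pq (Some a) (Some b) (Some c) None = (cmod (a - b) + cmod (b - c)) / cmod (a - c)"
| "pq _ _ _ _ = 0"

text \<open>Parametrisation of the boundary of S_alpha by s in [0,2), traversed in the positive
  direction (domain on the left): s = 0 gives 0, s in (0,1) runs along the positive real
  axis from 0 to \<infinity>, s = 1 gives \<infinity>, s in (1,2) runs back along the ray of angle alpha
  from \<infinity> to 0. This map is a bijection of [0,2) onto the boundary.\<close>
definition sector_bdry :: "real \<Rightarrow> real \<Rightarrow> complex option" where
  "sector_bdry \<alpha> s =
     (if s < 1 then Some (complex_of_real (s / (1 - s)))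
      else if s = 1 then None
      else Some (complex_of_real ((2 - s) / (s - 1)) * cis \<alpha>))"

definition cyc_order :: "real \<Rightarrow> real \<Rightarrow> real \<Rightarrow> real \<Rightarrow> bool" where
  "cyc_order sa sb sc sd \<longleftrightarrow>
     (sa < sb \<and> sb < sc \<and> sc < sd) \<or> (sb < sc \<and> sc < sd \<and> sd < sa) \<or>
     (sc < sd \<and> sd < sa \<and> sa < sb) \<or> (sd < sa \<and> sa < sb \<and> sb < sc)"

definition P_sector :: "real \<Rightarrow> ereal" where
  "P_sector \<alpha> = Sup {ereal (pq (sector_bdry \<alpha> sa) (sector_bdry \<alpha> sb) (sector_bdry \<alpha> sc) (sector_bdry \<alpha> sd))
      | sa sb sc sd. sa \<in> {0..<2} \<and> sb \<in> {0..<2} \<and> sc \<in> {0..<2} \<and> sd \<in> {0..<2}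
                    \<and> cyc_order sa sb sc sd}"

end

theory Submission
  imports Defs
begin

lemma sig_facts:
  assumes "0 < \<alpha>" "\<alpha> \<le> pi"
  shows "0 < sin (\<alpha>/2)" "sin (\<alpha>/2) \<le> 1" "sin (\<alpha>/2)^2 = (1 - cos \<alpha>)/2"
proof -
  show "0 < sin (\<alpha>/2)" using assms by (intro sin_gt_zero) auto
  show "sin (\<alpha>/2) \<le> 1" by simp
  have "cos (2*(\<alpha>/2)) = 1 - 2 * sin (\<alpha>/2)^2" by (rule cos_double_sin)
  then show "sin (\<alpha>/2)^2 = (1 - cos \<alpha>)/2" by simp
qed

lemma angle_bound:
  fixes x y :: complex
  assumes "Re (x * cnj y) \<le> cos \<alpha> * cmod x * cmod y"
  shows "sin (\<alpha>/2) * (cmod x + cmod y) \<le> cmod (x - y)"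
proof -
  define m where "m = cmod x"
  define n where "n = cmod y"
  define c where "c = cos \<alpha>"
  have s2: "sin (\<alpha>/2)^2 = (1 - c)/2"
    using cos_double_sin[of "\<alpha>/2"] by (simp add: c_def)
  have c1: "-1 \<le> c" by (simp add: c_def)
  have e: "cmod (x-y)^2 = m^2 + n^2 - 2*Re(x*cnj y)"
    unfolding m_def n_def cmod_power2 by (simp add: power2_eq_square algebra_simps)
  have id: "m^2 + n^2 - 2*c*m*n = (1-c)/2*(m+n)^2 + (1+c)/2*(m-n)^2"
    by (simp add: power2_eq_square field_simps)
  have nn: "0 \<le> (1+c)/2*(m-n)^2" using c1 by simp
  have R: "Re(x*cnj y) \<le> c*m*n" using assms by (simp add: c_def m_def n_def)
  have "(sin (\<alpha>/2) * (m+n))^2 = (1-c)/2*(m+n)^2" using s2 by (simp add: power_mult_distrib)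
  also have "\<dots> \<le> m^2 + n^2 - 2*c*m*n" using id nn by linarith
  also have "\<dots> \<le> cmod (x-y)^2" using e R by linarith
  finally have "(sin (\<alpha>/2) * (m+n))^2 \<le> cmod (x-y)^2" .
  then show ?thesis
    using power2_le_imp_le[of "sin (\<alpha>/2) * (m+n)" "cmod (x-y)"] by (simp add: m_def n_def)
qed

lemma cross:
  assumes "0 \<le> x" "0 \<le> u"
  shows "sin (\<alpha>/2) * (x + u) \<le> cmod (complex_of_real x - complex_of_real u * cis \<alpha>)"
    "cmod (complex_of_real x - complex_of_real u * cis \<alpha>) \<le> x + u"
proof -
  have "Re (complex_of_real x * cnj (complex_of_real u * cis \<alpha>)) = cos \<alpha> * cmod (complex_of_real x) * cmod (complex_of_real u * cis \<alpha>)"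
    using assms by (simp add: norm_mult)
  from angle_bound[of "complex_of_real x" "complex_of_real u * cis \<alpha>" \<alpha>] this
  show "sin (\<alpha>/2) * (x + u) \<le> cmod (complex_of_real x - complex_of_real u * cis \<alpha>)"
    using assms by (simp add: norm_mult)
  show "cmod (complex_of_real x - complex_of_real u * cis \<alpha>) \<le> x + u"
    using norm_triangle_ineq4[of "complex_of_real x" "complex_of_real u * cis \<alpha>"] assms
    by (simp add: norm_mult)
qed

lemma pq_rot: "pq a b c d = pq b c d a"
  by (cases a; cases b; cases c; cases d)
     (auto simp: cr_fin_def norm_minus_commute algebra_simps)

lemma ratio_le:
  fixes num den K s :: real
  assumes "0 < s" "num \<le> K" "s * K \<le> den" "0 < K"
  shows "num / den \<le> 1 / s"
proof -
  have dp: "0 < den" using assms by (smt (verit) mult_pos_pos)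
  have "num * s \<le> den" using assms by (smt (verit) mult.commute mult_right_mono)
  then show ?thesis using dp assms(1) by (simp add: divide_le_eq field_simps)
qed

lemma dist_real: "cmod (complex_of_real a - complex_of_real b) = \<bar>a - b\<bar>"
  by (metis norm_of_real of_real_diff)

lemma dist_ray: "cmod (complex_of_real a * cis t - complex_of_real b * cis t) = \<bar>a - b\<bar>"
proof -
  have "complex_of_real a * cis t - complex_of_real b * cis t = complex_of_real (a - b) * cis t"
    by (simp add: algebra_simps)
  then show ?thesis by (simp add: norm_mult dist_real)
qed

lemma one_le_inv_sig:
  fixes \<alpha> :: real
  assumes "0 < sin (\<alpha>/2)" shows "1 \<le> 1 / sin (\<alpha>/2)"
  using assms by (simp add: le_divide_eq)

lemma c_RRRQ:
  assumes s: "0 < sin (\<alpha>/2)" and h: "0 \<le> x1" "x1 < x2" "x2 < x3" "0 < u"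
  shows "pq (Some (complex_of_real x1)) (Some (complex_of_real x2)) (Some (complex_of_real x3))
            (Some (complex_of_real u * cis \<alpha>)) \<le> 1 / sin (\<alpha>/2)"
proof -
  let ?D = "\<lambda>x. cmod (complex_of_real x - complex_of_real u * cis \<alpha>)"
  have d3: "?D x3 \<le> x3 + u" and d1: "?D x1 \<le> x1 + u" using cross(2) h by auto
  have "(x2 - x1) * ?D x3 \<le> (x2 - x1) * (x3 + u)" using d3 h by (intro mult_left_mono) auto
  moreover have "?D x1 * (x3 - x2) \<le> (x1 + u) * (x3 - x2)" using d1 h by (intro mult_right_mono) auto
  moreover have "(x2 - x1) * (x3 + u) + (x1 + u) * (x3 - x2) = (x3 - x1) * (x2 + u)"
    by (simp add: algebra_simps)
  ultimately have num: "(x2 - x1) * ?D x3 + ?D x1 * (x3 - x2) \<le> (x3 - x1) * (x2 + u)" by linarith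
  have "sin (\<alpha>/2) * (x2 + u) \<le> ?D x2" using cross(1) h by auto
  then have den: "sin (\<alpha>/2) * ((x3 - x1) * (x2 + u)) \<le> (x3 - x1) * ?D x2"
    using h by (metis (no_types, lifting) diff_gt_0_iff_gt less_le mult.left_commute mult_left_mono order_less_trans)
  have K: "0 < (x3 - x1) * (x2 + u)" using h by simp
  have "((x2 - x1) * ?D x3 + ?D x1 * (x3 - x2)) / ((x3 - x1) * ?D x2) \<le> 1 / sin (\<alpha>/2)"
    by (rule ratio_le[OF s num den K])
  then show ?thesis using h by (simp add: cr_fin_def dist_real norm_minus_commute)
qed

lemma c_RQQQ:
  assumes s: "0 < sin (\<alpha>/2)" and h: "0 \<le> x" "u3 < u2" "u2 < u1" "0 < u3"
  shows "pq (Some (complex_of_real x)) (Some (complex_of_real u1 * cis \<alpha>)) (Some (complex_of_real u2 * cis \<alpha>))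
            (Some (complex_of_real u3 * cis \<alpha>)) \<le> 1 / sin (\<alpha>/2)"
proof -
  let ?D = "\<lambda>u. cmod (complex_of_real x - complex_of_real u * cis \<alpha>)"
  have d3: "?D u1 \<le> x + u1" and d1: "?D u3 \<le> x + u3" using cross(2) h by auto
  have "?D u1 * (u2 - u3) \<le> (x + u1) * (u2 - u3)" using d3 h by (intro mult_right_mono) auto
  moreover have "?D u3 * (u1 - u2) \<le> (x + u3) * (u1 - u2)" using d1 h by (intro mult_right_mono) auto
  moreover have "(x + u1) * (u2 - u3) + (x + u3) * (u1 - u2) = (u1 - u3) * (x + u2)"
    by (simp add: algebra_simps)
  ultimately have num: "?D u1 * (u2 - u3) + ?D u3 * (u1 - u2) \<le> (u1 - u3) * (x + u2)" by linarith
  have "sin (\<alpha>/2) * (x + u2) \<le> ?D u2" using cross(1) h by auto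
  then have den: "sin (\<alpha>/2) * ((u1 - u3) * (x + u2)) \<le> ?D u2 * (u1 - u3)"
    using h by (metis (no_types, lifting) diff_gt_0_iff_gt less_le mult.left_commute mult.commute mult_left_mono order_less_trans)
  have K: "0 < (u1 - u3) * (x + u2)" using h by simp
  have "(?D u1 * (u2 - u3) + ?D u3 * (u1 - u2)) / (?D u2 * (u1 - u3)) \<le> 1 / sin (\<alpha>/2)"
    by (rule ratio_le[OF s num den K])
  then show ?thesis using h by (simp add: cr_fin_def dist_ray norm_minus_commute)
qed

lemma c_RRIQ:
  assumes s: "0 < sin (\<alpha>/2)" and h: "0 \<le> x1" "x1 < x2" "0 < u"
  shows "pq (Some (complex_of_real x1)) (Some (complex_of_real x2)) None
            (Some (complex_of_real u * cis \<alpha>)) \<le> 1 / sin (\<alpha>/2)"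
proof -
  let ?D = "\<lambda>x. cmod (complex_of_real x - complex_of_real u * cis \<alpha>)"
  have "?D x1 \<le> x1 + u" using cross(2) h by auto
  then have num: "(x2 - x1) + ?D x1 \<le> x2 + u" by linarith
  have den: "sin (\<alpha>/2) * (x2 + u) \<le> ?D x2" using cross(1) h by auto
  have K: "0 < x2 + u" using h by simp
  have "((x2 - x1) + ?D x1) / ?D x2 \<le> 1 / sin (\<alpha>/2)"
    by (rule ratio_le[OF s num den K])
  then show ?thesis using h by (simp add: dist_real norm_minus_commute)
qed

lemma c_RIQQ:
  assumes s: "0 < sin (\<alpha>/2)" and h: "0 \<le> x" "u2 < u1" "0 < u2"
  shows "pq (Some (complex_of_real x)) None (Some (complex_of_real u1 * cis \<alpha>))
            (Some (complex_of_real u2 * cis \<alpha>)) \<le> 1 / sin (\<alpha>/2)"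
proof -
  let ?D = "\<lambda>u. cmod (complex_of_real x - complex_of_real u * cis \<alpha>)"
  have "?D u2 \<le> x + u2" using cross(2) h by auto
  then have num: "(u1 - u2) + ?D u2 \<le> x + u1" by linarith
  have den: "sin (\<alpha>/2) * (x + u1) \<le> ?D u1" using cross(1) h by auto
  have K: "0 < x + u1" using h by simp
  have "((u1 - u2) + ?D u2) / ?D u1 \<le> 1 / sin (\<alpha>/2)"
    by (rule ratio_le[OF s num den K])
  then show ?thesis using h by (simp add: dist_ray norm_minus_commute)
qed

lemma c_RRRR:
  assumes s: "0 < sin (\<alpha>/2)" and h: "x1 < x2" "x2 < x3" "x3 < x4"
  shows "pq (Some (complex_of_real x1)) (Some (complex_of_real x2)) (Some (complex_of_real x3))
            (Some (complex_of_real x4)) \<le> 1 / sin (\<alpha>/2)"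
proof -
  have e: "(x2-x1)*(x4-x3) + (x4-x1)*(x3-x2) = (x3-x1)*(x4-x2)" by (simp add: algebra_simps)
  have "((x2-x1)*(x4-x3) + (x4-x1)*(x3-x2)) / ((x3-x1)*(x4-x2)) = 1"
    using h e by (simp add: mult_pos_pos)
  moreover have "pq (Some (complex_of_real x1)) (Some (complex_of_real x2)) (Some (complex_of_real x3))
            (Some (complex_of_real x4)) = ((x2-x1)*(x4-x3) + (x4-x1)*(x3-x2)) / ((x3-x1)*(x4-x2))"
    using h by (simp add: cr_fin_def dist_real)
  ultimately have "pq (Some (complex_of_real x1)) (Some (complex_of_real x2)) (Some (complex_of_real x3))
            (Some (complex_of_real x4)) = 1"
    by linarith
  then show ?thesis using one_le_inv_sig[OF s] by linarith
qed

lemma c_RRRI: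
  assumes s: "0 < sin (\<alpha>/2)" and h: "x1 < x2" "x2 < x3"
  shows "pq (Some (complex_of_real x1)) (Some (complex_of_real x2)) (Some (complex_of_real x3))
            None \<le> 1 / sin (\<alpha>/2)"
proof -
  have "((x2-x1) + (x3-x2)) / (x3-x1) = 1"
    using h by (simp add: field_simps)
  moreover have "pq (Some (complex_of_real x1)) (Some (complex_of_real x2)) (Some (complex_of_real x3))
            None = ((x2-x1) + (x3-x2)) / (x3-x1)"
    using h by (simp only: pq.simps dist_real) simp
  ultimately have "pq (Some (complex_of_real x1)) (Some (complex_of_real x2)) (Some (complex_of_real x3))
            None = 1"
    by linarith
  then show ?thesis using one_le_inv_sig[OF s] by linarith
qed

lemma c_IQQQ:
  assumes s: "0 < sin (\<alpha>/2)" and h: "u3 < u2" "u2 < u1"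
  shows "pq None (Some (complex_of_real u1 * cis \<alpha>)) (Some (complex_of_real u2 * cis \<alpha>))
            (Some (complex_of_real u3 * cis \<alpha>)) \<le> 1 / sin (\<alpha>/2)"
proof -
  have "((u2-u3) + (u1-u2)) / (u1-u3) = 1"
    using h by (simp add: field_simps)
  moreover have "pq None (Some (complex_of_real u1 * cis \<alpha>)) (Some (complex_of_real u2 * cis \<alpha>))
            (Some (complex_of_real u3 * cis \<alpha>)) = ((u2-u3) + (u1-u2)) / (u1-u3)"
    using h by (simp only: pq.simps dist_ray)
  ultimately have "pq None (Some (complex_of_real u1 * cis \<alpha>)) (Some (complex_of_real u2 * cis \<alpha>))
            (Some (complex_of_real u3 * cis \<alpha>)) = 1"
    by linarith
  then show ?thesis using one_le_inv_sig[OF s] by linarith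
qed

lemma c_QQQQ:
  assumes s: "0 < sin (\<alpha>/2)" and h: "u4 < u3" "u3 < u2" "u2 < u1"
  shows "pq (Some (complex_of_real u1 * cis \<alpha>)) (Some (complex_of_real u2 * cis \<alpha>)) (Some (complex_of_real u3 * cis \<alpha>))
            (Some (complex_of_real u4 * cis \<alpha>)) \<le> 1 / sin (\<alpha>/2)"
proof -
  have e: "(u1-u2)*(u3-u4) + (u1-u4)*(u2-u3) = (u1-u3)*(u2-u4)" by (simp add: algebra_simps)
  have "((u1-u2)*(u3-u4) + (u1-u4)*(u2-u3)) / ((u1-u3)*(u2-u4)) = 1"
    using h e by (simp add: mult_pos_pos)
  moreover have "pq (Some (complex_of_real u1 * cis \<alpha>)) (Some (complex_of_real u2 * cis \<alpha>)) (Some (complex_of_real u3 * cis \<alpha>))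
            (Some (complex_of_real u4 * cis \<alpha>)) = ((u1-u2)*(u3-u4) + (u1-u4)*(u2-u3)) / ((u1-u3)*(u2-u4))"
    using h by (simp add: cr_fin_def dist_ray)
  ultimately have "pq (Some (complex_of_real u1 * cis \<alpha>)) (Some (complex_of_real u2 * cis \<alpha>)) (Some (complex_of_real u3 * cis \<alpha>))
            (Some (complex_of_real u4 * cis \<alpha>)) = 1"
    by linarith
  then show ?thesis using one_le_inv_sig[OF s] by linarith
qed

lemma amgm_min:
  fixes x1 x2 u1 u2 :: real
  assumes h: "0 \<le> x1" "x1 < x2" "u2 < u1" "0 < u2" and le: "a \<le> b" "0 \<le> a"
    and ab: "a * b = (x1*u1) * (x2*u2)"
  shows "2 * a \<le> x1*u1 + x2*u2"
proof -
  have "(x1*u1 + x2*u2)^2 - 4*((x1*u1)*(x2*u2)) = (x1*u1 - x2*u2)^2" by (simp add: power2_eq_square algebra_simps)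
  then have "4*((x1*u1)*(x2*u2)) \<le> (x1*u1 + x2*u2)^2" by (smt (verit) zero_le_power2)
  moreover have "a * a \<le> a * b" using le by (simp add: mult_left_mono)
  ultimately have "(2*a)^2 \<le> (x1*u1 + x2*u2)^2" using ab by (simp add: power2_eq_square)
  moreover have "0 \<le> x1*u1 + x2*u2" using h by simp
  ultimately show ?thesis using power2_le_imp_le by blast
qed

lemma c_RRQQ:
  assumes s: "0 < sin (\<alpha>/2)" and h: "0 \<le> x1" "x1 < x2" "u2 < u1" "0 < u2"
  shows "pq (Some (complex_of_real x1)) (Some (complex_of_real x2)) (Some (complex_of_real u1 * cis \<alpha>))
            (Some (complex_of_real u2 * cis \<alpha>)) \<le> 1 / sin (\<alpha>/2)"
proof -
  define w where "w = cis \<alpha>"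
  define c where "c = cos \<alpha>"
  define B where "B = (complex_of_real x1 - complex_of_real u2 * w) * (complex_of_real x2 - complex_of_real u1 * w)"
  define z where "z = B * cnj w"
  define A where "A = (x2 - x1) * (u1 - u2)"
  define P where "P = x1*x2 + u1*u2"
  define Q where "Q = x1*u1 + x2*u2"
  define I where "I = u1*u2 - x1*x2"
  have wc: "w * cnj w = 1" by (simp add: w_def cis_cnj cis_mult)
  have "z = complex_of_real (x1*x2) * cnj w - complex_of_real (x1*u1 + x2*u2) * (w * cnj w)
            + complex_of_real (u1*u2) * w * (w * cnj w)"
    by (simp add: z_def B_def algebra_simps)
  also have "\<dots> = complex_of_real (x1*x2) * cnj w - complex_of_real (x1*u1 + x2*u2)
            + complex_of_real (u1*u2) * w" using wc by simp
  finally have zexp: "z = complex_of_real (x1*x2) * cnj w - complex_of_real (x1*u1 + x2*u2)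
            + complex_of_real (u1*u2) * w" .
  have Rez: "Re z = c * P - Q" unfolding zexp by (simp add: w_def c_def P_def Q_def algebra_simps)
  have Imz: "Im z = sin \<alpha> * I" unfolding zexp by (simp add: w_def I_def algebra_simps)
  have nz: "cmod z = cmod B" by (simp add: z_def norm_mult w_def)
  have Bn: "cmod B = cmod (complex_of_real x1 - complex_of_real u2 * w) * cmod (complex_of_real x2 - complex_of_real u1 * w)"
    by (simp add: B_def norm_mult)
  have Q0: "0 \<le> Q" using h by (simp add: Q_def)
  have c1: "-1 \<le> c" "c \<le> 1" by (auto simp: c_def)
  have key: "Re z \<le> c * cmod z"
  proof (cases "c < 0")
    case True
    have "cmod B \<le> (x1 + u2) * (x2 + u1)"
      unfolding Bn w_def using cross(2)[of x1 u2 \<alpha>] cross(2)[of x2 u1 \<alpha>] h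
      by (intro mult_mono) auto
    also have "\<dots> = P + Q" by (simp add: P_def Q_def algebra_simps)
    finally have "cmod B - P \<le> Q" by simp
    then have "(-c) * (cmod B - P) \<le> (-c) * Q" using True by (intro mult_left_mono) auto
    moreover have "(-c) * Q \<le> Q" using mult_right_mono[of "-c" 1 Q] c1 Q0 by simp
    ultimately show ?thesis using Rez nz by (simp add: algebra_simps)
  next
    case False
    show ?thesis
    proof (cases "Re z \<le> 0")
      case True then show ?thesis using False by (smt (verit) mult_nonneg_nonneg norm_ge_zero)
    next
      case pos: False
      have PI: "P - \<bar>I\<bar> \<le> Q"
      proof (cases "x1*x2 \<le> u1*u2")
        case True
        have "2 * (x1*x2) \<le> Q" unfolding Q_def
          by (rule amgm_min[OF h True]) (use h in \<open>auto simp: algebra_simps\<close>)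
        then show ?thesis using True by (simp add: P_def I_def)
      next
        case False
        have "2 * (u1*u2) \<le> Q" unfolding Q_def
          by (rule amgm_min[OF h, of "u1*u2" "x1*x2"]) (use h False in \<open>auto simp: algebra_simps\<close>)
        then show ?thesis using False by (simp add: P_def I_def)
      qed
      have "0 \<le> x1*x2" "0 \<le> u1*u2" using h by auto
      then have PI0: "0 \<le> P - \<bar>I\<bar>" by (simp add: P_def I_def abs_if)
      have "c * (P - \<bar>I\<bar>) \<le> 1 * (P - \<bar>I\<bar>)" using c1 PI0 by (intro mult_right_mono) auto
      then have R1: "Re z \<le> c * \<bar>I\<bar>" using Rez PI by (simp add: algebra_simps)
      have R0: "0 < Re z" using pos by simp
      have "(Re z)^2 \<le> (c * \<bar>I\<bar>)^2" using R1 R0 by (intro power_mono) auto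
      then have "(Re z)^2 \<le> c^2 * I^2" by (simp add: power_mult_distrib)
      then have "sin \<alpha> ^2 * (Re z)^2 \<le> sin \<alpha> ^2 * (c^2 * I^2)" by (intro mult_left_mono) auto
      moreover have "(Re z)^2 = (Re z)^2 * (cos \<alpha>)^2 + (Re z)^2 * (sin \<alpha>)^2"
        by (metis distrib_left mult.right_neutral sin_cos_squared_add2)
      ultimately have "(Re z)^2 \<le> c^2 * ((Re z)^2 + (sin \<alpha> * I)^2)"
        unfolding c_def power_mult_distrib by (simp add: algebra_simps)
      also have "\<dots> = (c * cmod z)^2" using Imz by (simp add: cmod_power2 power_mult_distrib)
      finally have "(Re z)^2 \<le> (c * cmod z)^2" .
      moreover have "0 \<le> c * cmod z" using False by simp
      ultimately show ?thesis using power2_le_imp_le by blast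
    qed
  qed
  have A0: "0 \<le> A" using h by (simp add: A_def)
  have "Re (B * cnj (complex_of_real A * w)) = A * Re z"
    by (simp add: z_def algebra_simps)
  also have "\<dots> \<le> A * (c * cmod B)" using key nz A0 by (simp add: mult_left_mono)
  also have "\<dots> = cos \<alpha> * cmod B * cmod (complex_of_real A * w)"
    using A0 by (simp add: c_def norm_mult w_def)
  finally have "sin (\<alpha>/2) * (cmod B + cmod (complex_of_real A * w)) \<le> cmod (B - complex_of_real A * w)"
    by (rule angle_bound)
  moreover have "cmod (complex_of_real A * w) = A" using A0 by (simp add: norm_mult w_def)
  moreover have "B - complex_of_real A * w =
     (complex_of_real x1 - complex_of_real u1 * w) * (complex_of_real x2 - complex_of_real u2 * w)"
    by (simp add: B_def A_def algebra_simps)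
  ultimately have den: "sin (\<alpha>/2) * (A + cmod B) \<le>
     cmod (complex_of_real x1 - complex_of_real u1 * w) * cmod (complex_of_real x2 - complex_of_real u2 * w)"
    by (simp add: norm_mult add.commute)
  have "sin (\<alpha>/2) * (x1 + u2) \<le> cmod (complex_of_real x1 - complex_of_real u2 * w)"
    unfolding w_def using cross(1) h by auto
  then have "0 < cmod (complex_of_real x1 - complex_of_real u2 * w)" using s h
    by (smt (verit) mult_pos_pos)
  moreover have "0 < cmod (complex_of_real x2 - complex_of_real u1 * w)"
  proof -
    have "sin (\<alpha>/2) * (x2 + u1) \<le> cmod (complex_of_real x2 - complex_of_real u1 * w)"
      unfolding w_def using cross(1) h by auto
    then show ?thesis using s h by (smt (verit) mult_pos_pos)
  qed
  ultimately have "0 < cmod B" unfolding Bn by (rule mult_pos_pos)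
  then have K: "0 < A + cmod B" using A0 by linarith
  have "(A + cmod B) / (cmod (complex_of_real x1 - complex_of_real u1 * w) * cmod (complex_of_real x2 - complex_of_real u2 * w))
     \<le> 1 / sin (\<alpha>/2)"
    by (rule ratio_le[OF s order_refl den K])
  then show ?thesis
    using h by (simp add: cr_fin_def dist_real dist_ray norm_minus_commute A_def Bn w_def)
qed

lemma bd_lt: "s < 1 \<Longrightarrow> sector_bdry \<alpha> s = Some (complex_of_real (s/(1-s)))"
  by (simp add: sector_bdry_def)

lemma bd_1: "sector_bdry \<alpha> 1 = None"
  by (simp add: sector_bdry_def)

lemma bd_gt: "1 < s \<Longrightarrow> sector_bdry \<alpha> s = Some (complex_of_real ((2-s)/(s-1)) * cis \<alpha>)"
  by (simp add: sector_bdry_def)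

lemma t_mono:
  fixes s s1 s2 :: real
  shows "0 \<le> s1 \<Longrightarrow> s1 < s2 \<Longrightarrow> s2 < 1 \<Longrightarrow> s1/(1-s1) < s2/(1-s2)"
  by (simp add: divide_simps) (simp add: algebra_simps)

lemma t_nonneg:
  fixes s s1 s2 :: real
  shows "0 \<le> s \<Longrightarrow> s < 1 \<Longrightarrow> 0 \<le> s/(1-s)"
  by simp

lemma v_mono:
  fixes s s1 s2 :: real
  shows "1 < s1 \<Longrightarrow> s1 < s2 \<Longrightarrow> s2 < 2 \<Longrightarrow> (2-s2)/(s2-1) < (2-s1)/(s1-1)"
  by (simp add: divide_simps) (simp add: algebra_simps)

lemma v_pos:
  fixes s s1 s2 :: real
  shows "1 < s \<Longrightarrow> s < 2 \<Longrightarrow> 0 < (2-s)/(s-1)"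
  by simp

lemma inc_RRRR:
  assumes s: "0 < sin (\<alpha>/2)" and h: "0 \<le> sa" "sa < sb" "sb < sc" "sc < sd" "sd < 2"
    and f0: "sd < 1"
  shows "pq (sector_bdry \<alpha> sa) (sector_bdry \<alpha> sb) (sector_bdry \<alpha> sc) (sector_bdry \<alpha> sd) \<le> 1 / sin (\<alpha>/2)"
proof -
  have f: "sa < 1" "sb < 1" "sc < 1" "sd < 1" using h f0 by linarith+
  show ?thesis
    unfolding bd_lt[OF f(1)] bd_lt[OF f(2)] bd_lt[OF f(3)] bd_lt[OF f(4)]
    apply (intro c_RRRR[OF s] t_mono)
    using h f by linarith+
qed

lemma inc_RRRI:
  assumes s: "0 < sin (\<alpha>/2)" and h: "0 \<le> sa" "sa < sb" "sb < sc" "sc < sd" "sd < 2"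
    and f0: "sc < 1" "sd = 1"
  shows "pq (sector_bdry \<alpha> sa) (sector_bdry \<alpha> sb) (sector_bdry \<alpha> sc) (sector_bdry \<alpha> sd) \<le> 1 / sin (\<alpha>/2)"
proof -
  have f: "sa < 1" "sb < 1" "sc < 1" "sd = 1" using h f0 by linarith+
  show ?thesis
    unfolding bd_lt[OF f(1)] bd_lt[OF f(2)] bd_lt[OF f(3)] f(4) bd_1
    apply (intro c_RRRI[OF s] t_mono)
    using h f by linarith+
qed

lemma inc_RRRQ:
  assumes s: "0 < sin (\<alpha>/2)" and h: "0 \<le> sa" "sa < sb" "sb < sc" "sc < sd" "sd < 2"
    and f0: "sc < 1" "1 < sd"
  shows "pq (sector_bdry \<alpha> sa) (sector_bdry \<alpha> sb) (sector_bdry \<alpha> sc) (sector_bdry \<alpha> sd) \<le> 1 / sin (\<alpha>/2)"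
proof -
  have f: "sa < 1" "sb < 1" "sc < 1" "1 < sd" using h f0 by linarith+
  show ?thesis
    unfolding bd_lt[OF f(1)] bd_lt[OF f(2)] bd_lt[OF f(3)] bd_gt[OF f(4)]
    apply (intro c_RRRQ[OF s] t_mono t_nonneg v_pos)
    using h f by linarith+
qed

lemma inc_RRIQ:
  assumes s: "0 < sin (\<alpha>/2)" and h: "0 \<le> sa" "sa < sb" "sb < sc" "sc < sd" "sd < 2"
    and f0: "sb < 1" "sc = 1"
  shows "pq (sector_bdry \<alpha> sa) (sector_bdry \<alpha> sb) (sector_bdry \<alpha> sc) (sector_bdry \<alpha> sd) \<le> 1 / sin (\<alpha>/2)"
proof -
  have f: "sa < 1" "sb < 1" "sc = 1" "1 < sd" using h f0 by linarith+
  show ?thesis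
    unfolding bd_lt[OF f(1)] bd_lt[OF f(2)] f(3) bd_1 bd_gt[OF f(4)]
    apply (intro c_RRIQ[OF s] t_mono t_nonneg v_pos)
    using h f by linarith+
qed

lemma inc_RRQQ:
  assumes s: "0 < sin (\<alpha>/2)" and h: "0 \<le> sa" "sa < sb" "sb < sc" "sc < sd" "sd < 2"
    and f0: "sb < 1" "1 < sc"
  shows "pq (sector_bdry \<alpha> sa) (sector_bdry \<alpha> sb) (sector_bdry \<alpha> sc) (sector_bdry \<alpha> sd) \<le> 1 / sin (\<alpha>/2)"
proof -
  have f: "sa < 1" "sb < 1" "1 < sc" "1 < sd" using h f0 by linarith+
  show ?thesis
    unfolding bd_lt[OF f(1)] bd_lt[OF f(2)] bd_gt[OF f(3)] bd_gt[OF f(4)]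
    apply (intro c_RRQQ[OF s] t_mono t_nonneg v_pos v_mono)
    using h f by linarith+
qed

lemma inc_RIQQ:
  assumes s: "0 < sin (\<alpha>/2)" and h: "0 \<le> sa" "sa < sb" "sb < sc" "sc < sd" "sd < 2"
    and f0: "sa < 1" "sb = 1"
  shows "pq (sector_bdry \<alpha> sa) (sector_bdry \<alpha> sb) (sector_bdry \<alpha> sc) (sector_bdry \<alpha> sd) \<le> 1 / sin (\<alpha>/2)"
proof -
  have f: "sa < 1" "sb = 1" "1 < sc" "1 < sd" using h f0 by linarith+
  show ?thesis
    unfolding bd_lt[OF f(1)] f(2) bd_1 bd_gt[OF f(3)] bd_gt[OF f(4)]
    apply (intro c_RIQQ[OF s] t_nonneg v_pos v_mono)
    using h f by linarith+
qed

lemma inc_RQQQ: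
  assumes s: "0 < sin (\<alpha>/2)" and h: "0 \<le> sa" "sa < sb" "sb < sc" "sc < sd" "sd < 2"
    and f0: "sa < 1" "1 < sb"
  shows "pq (sector_bdry \<alpha> sa) (sector_bdry \<alpha> sb) (sector_bdry \<alpha> sc) (sector_bdry \<alpha> sd) \<le> 1 / sin (\<alpha>/2)"
proof -
  have f: "sa < 1" "1 < sb" "1 < sc" "1 < sd" using h f0 by linarith+
  show ?thesis
    unfolding bd_lt[OF f(1)] bd_gt[OF f(2)] bd_gt[OF f(3)] bd_gt[OF f(4)]
    apply (intro c_RQQQ[OF s] t_nonneg v_pos v_mono)
    using h f by linarith+
qed

lemma inc_IQQQ:
  assumes s: "0 < sin (\<alpha>/2)" and h: "0 \<le> sa" "sa < sb" "sb < sc" "sc < sd" "sd < 2"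
    and f0: "sa = 1"
  shows "pq (sector_bdry \<alpha> sa) (sector_bdry \<alpha> sb) (sector_bdry \<alpha> sc) (sector_bdry \<alpha> sd) \<le> 1 / sin (\<alpha>/2)"
proof -
  have f: "sa = 1" "1 < sb" "1 < sc" "1 < sd" using h f0 by linarith+
  show ?thesis
    unfolding f(1) bd_1 bd_gt[OF f(2)] bd_gt[OF f(3)] bd_gt[OF f(4)]
    apply (intro c_IQQQ[OF s] v_mono)
    using h f by linarith+
qed

lemma inc_QQQQ:
  assumes s: "0 < sin (\<alpha>/2)" and h: "0 \<le> sa" "sa < sb" "sb < sc" "sc < sd" "sd < 2"
    and f0: "1 < sa"
  shows "pq (sector_bdry \<alpha> sa) (sector_bdry \<alpha> sb) (sector_bdry \<alpha> sc) (sector_bdry \<alpha> sd) \<le> 1 / sin (\<alpha>/2)"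
proof -
  have f: "1 < sa" "1 < sb" "1 < sc" "1 < sd" using h f0 by linarith+
  show ?thesis
    unfolding bd_gt[OF f(1)] bd_gt[OF f(2)] bd_gt[OF f(3)] bd_gt[OF f(4)]
    apply (intro c_QQQQ[OF s] v_mono)
    using h f by linarith+
qed

lemma aux_half:
  fixes X c :: real
  assumes "X = (1 - c)/2" shows "2 - 2*c = 4*X"
  using assms by simp

lemma witness_val:
  assumes "0 < \<alpha>" "\<alpha> \<le> pi"
  shows "pq (sector_bdry \<alpha> 0) (sector_bdry \<alpha> (1/2)) (sector_bdry \<alpha> 1) (sector_bdry \<alpha> (3/2))
     = 1 / sin (\<alpha>/2)"
proof -
  have sp: "0 < sin (\<alpha>/2)" and s2: "sin (\<alpha>/2)^2 = (1 - cos \<alpha>)/2"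
    using sig_facts[OF assms] by auto
  have "cmod (1 - cis \<alpha>)^2 = (1 - cos \<alpha>)^2 + (sin \<alpha>)^2" by (simp add: cmod_power2)
  also have "\<dots> = 1 - 2 * cos \<alpha> + ((sin \<alpha>)^2 + (cos \<alpha>)^2)"
    by (simp add: power2_eq_square algebra_simps)
  also have "\<dots> = 2 - 2 * cos \<alpha>" using sin_cos_squared_add[of \<alpha>] by linarith
  also have "\<dots> = 4 * sin (\<alpha>/2)^2" using aux_half[OF s2] .
  also have "\<dots> = (2 * sin (\<alpha>/2))^2" unfolding power_mult_distrib by simp
  finally have sq: "cmod (1 - cis \<alpha>)^2 = (2 * sin (\<alpha>/2))^2" .
  have n: "cmod (1 - cis \<alpha>) = 2 * sin (\<alpha>/2)"
    by (rule power2_eq_imp_eq[OF sq norm_ge_zero]) (use sp in simp)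
  have b1: "sector_bdry \<alpha> (3/2) = Some (cis \<alpha>)" by (simp add: sector_bdry_def)
  have b2: "sector_bdry \<alpha> (1/2) = Some 1" by (simp add: sector_bdry_def)
  have b3: "sector_bdry \<alpha> 0 = Some 0" by (simp add: sector_bdry_def)
  have "pq (Some 0) (Some 1) None (Some (cis \<alpha>)) = (cmod (0 - 1) + cmod (0 - cis \<alpha>)) / cmod (1 - cis \<alpha>)"
    by (simp only: pq.simps)
  also have "\<dots> = 2 / (2 * sin (\<alpha>/2))" unfolding n by simp
  also have "\<dots> = 1 / sin (\<alpha>/2)" by simp
  finally show ?thesis unfolding b1 b2 b3 bd_1 .
qed

lemma inc_bound:
  assumes s: "0 < sin (\<alpha>/2)" and h: "0 \<le> sa" "sa < sb" "sb < sc" "sc < sd" "sd < 2"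
  shows "pq (sector_bdry \<alpha> sa) (sector_bdry \<alpha> sb) (sector_bdry \<alpha> sc) (sector_bdry \<alpha> sd) \<le> 1 / sin (\<alpha>/2)"
proof -
  have "sd < 1 \<or> (sc < 1 \<and> sd = 1) \<or> (sc < 1 \<and> 1 < sd) \<or> (sb < 1 \<and> sc = 1) \<or> (sb < 1 \<and> 1 < sc)
     \<or> (sa < 1 \<and> sb = 1) \<or> (sa < 1 \<and> 1 < sb) \<or> sa = 1 \<or> 1 < sa" using h by argo
  then consider "sd < 1" | "sc < 1" "sd = 1" | "sc < 1" "1 < sd" | "sb < 1" "sc = 1" | "sb < 1" "1 < sc"
     | "sa < 1" "sb = 1" | "sa < 1" "1 < sb" | "sa = 1" | "1 < sa" by argo
  then show ?thesis
  proof cases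
    case 1 then show ?thesis by (rule inc_RRRR[OF s h])
  next
    case 2 then show ?thesis by (rule inc_RRRI[OF s h])
  next
    case 3 then show ?thesis by (rule inc_RRRQ[OF s h])
  next
    case 4 then show ?thesis by (rule inc_RRIQ[OF s h])
  next
    case 5 then show ?thesis by (rule inc_RRQQ[OF s h])
  next
    case 6 then show ?thesis by (rule inc_RIQQ[OF s h])
  next
    case 7 then show ?thesis by (rule inc_RQQQ[OF s h])
  next
    case 8 then show ?thesis by (rule inc_IQQQ[OF s h])
  next
    case 9 then show ?thesis by (rule inc_QQQQ[OF s h])
  qed
qed

lemma cyc_bound:
  assumes s: "0 < sin (\<alpha>/2)"
    and r: "sa \<in> {0..<2}" "sb \<in> {0..<2}" "sc \<in> {0..<2}" "sd \<in> {0..<2}"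
    and cyc: "cyc_order sa sb sc sd"
  shows "pq (sector_bdry \<alpha> sa) (sector_bdry \<alpha> sb) (sector_bdry \<alpha> sc) (sector_bdry \<alpha> sd) \<le> 1 / sin (\<alpha>/2)"
proof -
  let ?A = "sector_bdry \<alpha> sa" and ?B = "sector_bdry \<alpha> sb" and ?C = "sector_bdry \<alpha> sc" and ?D = "sector_bdry \<alpha> sd"
  have r': "0 \<le> sa" "sa < 2" "0 \<le> sb" "sb < 2" "0 \<le> sc" "sc < 2" "0 \<le> sd" "sd < 2" using r by auto
  have e1: "pq ?A ?B ?C ?D = pq ?B ?C ?D ?A" by (rule pq_rot)
  have e2: "pq ?B ?C ?D ?A = pq ?C ?D ?A ?B" by (rule pq_rot)
  have e3: "pq ?D ?A ?B ?C = pq ?A ?B ?C ?D" by (rule pq_rot)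
  have c1: "pq ?A ?B ?C ?D \<le> 1 / sin (\<alpha>/2)" if q: "sa < sb \<and> sb < sc \<and> sc < sd"
    by (rule inc_bound[OF s]) (use r' q in linarith)+
  have c2: "pq ?A ?B ?C ?D \<le> 1 / sin (\<alpha>/2)" if q: "sb < sc \<and> sc < sd \<and> sd < sa"
    unfolding e1 by (rule inc_bound[OF s]) (use r' q in linarith)+
  have c3: "pq ?A ?B ?C ?D \<le> 1 / sin (\<alpha>/2)" if q: "sc < sd \<and> sd < sa \<and> sa < sb"
    unfolding e1 e2 by (rule inc_bound[OF s]) (use r' q in linarith)+
  have c4: "pq ?A ?B ?C ?D \<le> 1 / sin (\<alpha>/2)" if q: "sd < sa \<and> sa < sb \<and> sb < sc"
    unfolding e3[symmetric] by (rule inc_bound[OF s]) (use r' q in linarith)+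
  show ?thesis using cyc c1 c2 c3 c4 unfolding cyc_order_def by blast
qed

theorem theorem3p6:
  fixes \<alpha> :: real
  assumes "0 < \<alpha>" and "\<alpha> \<le> pi"
  shows "P_sector \<alpha> = ereal (1 / sin (\<alpha> / 2))"
proof -
  have s: "0 < sin (\<alpha>/2)" using sig_facts[OF assms] by auto
  define S where "S = {ereal (pq (sector_bdry \<alpha> sa) (sector_bdry \<alpha> sb) (sector_bdry \<alpha> sc) (sector_bdry \<alpha> sd))
      | sa sb sc sd. sa \<in> {0..<2} \<and> sb \<in> {0..<2} \<and> sc \<in> {0..<2} \<and> sd \<in> {0..<2}
                    \<and> cyc_order sa sb sc sd}"
  have ub: "x \<le> ereal (1 / sin (\<alpha>/2))" if xS: "x \<in> S" for x
  proof -
    obtain sa sb sc sd where x: "x = ereal (pq (sector_bdry \<alpha> sa) (sector_bdry \<alpha> sb) (sector_bdry \<alpha> sc) (sector_bdry \<alpha> sd))"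
      and r: "sa \<in> {0..<2}" "sb \<in> {0..<2}" "sc \<in> {0..<2}" "sd \<in> {0..<2}" and c: "cyc_order sa sb sc sd"
      using xS unfolding S_def by blast
    show ?thesis unfolding x using cyc_bound[OF s r c] by simp
  qed
  have cy: "cyc_order 0 (1/2) 1 (3/2)" by (simp add: cyc_order_def)
  have mem: "ereal (1 / sin (\<alpha>/2)) \<in> S"
    unfolding S_def mem_Collect_eq
    apply (rule exI[of _ 0], rule exI[of _ "1/2"], rule exI[of _ 1], rule exI[of _ "3/2"])
    using witness_val[OF assms] cy by simp
  have "Sup S = ereal (1 / sin (\<alpha>/2))"
  proof (rule antisym)
    show "Sup S \<le> ereal (1 / sin (\<alpha>/2))" by (rule Sup_least) (rule ub)
    show "ereal (1 / sin (\<alpha>/2)) \<le> Sup S" by (rule Sup_upper) (rule mem)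
  qed
  then show ?thesis unfolding P_sector_def S_def .
qed

end
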